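(* Let $Q$ be a Foulis quantale, and for $t\in Q$ put $t^\perp=[t^*]$. On $Q$ define the relation $s\le t$ iff $s=t\cdot s$. Then for all $t,r\in Q$ and all $k\in[Q]=\{[t]\mid t\in Q\}$: ( * ) $r^*\cdot t=0 \iff t=[r^*]\cdot t$; ( ** ) $t\le r$ implies $r^\perp\le t^\perp$, and $k^{\perp\perp}=k$; ( *** ) $t\le r^\perp \iff r\le t^\perp$. Moreover, $[Q]$ is a complete orthomodular lattice with the following structure: order $k_1\le k_2$ iff $k_1=k_2\cdot k_1$; top element $1=[0]$; orthocomplement $k^\perp=[k]$; meet $k_1\wedge k_2=\big(k_1\cdot[[k_2]\cdot k_1]\big)^{\perp\perp}$; and for any $S\subseteq[Q]$, join $\bigvee S=[[\bigsqcup S]]$, where $\bigsqcup$ denotes the join in the complete lattice $Q$.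
   Context: A quantale is a complete lattice $Q$ (join $\bigsqcup$, order $\sqsubseteq$) with an associative multiplication distributing over arbitrary joins on both sides; unital if it has a two-sided unit $e$; involutive if equipped with a join-preserving semigroup involution $*$ (so $a^{**}=a$, $(ab)^*=b^*a^*$). A Foulis quantale is a unital involutive quantale $Q$ with an endomap $[-]\colon Q\to Q$ such that: (a) $[s]\cdot[s]=[s]=[s]^*$ for all $s$; (b) $[e]=0$, where $0$ is the least element of $Q$; (c) for all $s,x\in Q$: $s\cdot x=0$ iff there exists $y\in Q$ with $x=[s]\cdot y$. An orthomodular lattice is a bounded lattice with an involutive order-reversing map $x\mapsto x^\perp$ with $x\wedge x^\perp=0$ such that $x\le y$ implies $y=x\vee(x^\perp\wedge y)$. *)

theory Defs
  imports Main
begin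

text \<open>Quantales are modelled on a type of class complete_lattice (join = Sup, order = less_eq,
least element = bot), with the multiplication, unit, involution and the Foulis map
given as explicit parameters.\<close>

definition quantale :: "('a::complete_lattice \<Rightarrow> 'a \<Rightarrow> 'a) \<Rightarrow> bool" where
  "quantale m \<longleftrightarrow>
     (\<forall>a b c. m (m a b) c = m a (m b c)) \<and>
     (\<forall>a A. m a (Sup A) = Sup (m a ` A)) \<and>
     (\<forall>a A. m (Sup A) a = Sup ((\<lambda>b. m b a) ` A))"

definition unital_involutive_quantale ::
  "('a::complete_lattice \<Rightarrow> 'a \<Rightarrow> 'a) \<Rightarrow> 'a \<Rightarrow> ('a \<Rightarrow> 'a) \<Rightarrow> bool" where
  "unital_involutive_quantale m e st \<longleftrightarrow>
     quantale m \<and>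
     (\<forall>a. m e a = a \<and> m a e = a) \<and>
     (\<forall>a. st (st a) = a) \<and>
     (\<forall>a b. st (m a b) = m (st b) (st a)) \<and>
     (\<forall>A. st (Sup A) = Sup (st ` A))"

definition foulis_quantale ::
  "('a::complete_lattice \<Rightarrow> 'a \<Rightarrow> 'a) \<Rightarrow> 'a \<Rightarrow> ('a \<Rightarrow> 'a) \<Rightarrow> ('a \<Rightarrow> 'a) \<Rightarrow> bool" where
  "foulis_quantale m e st br \<longleftrightarrow>
     unital_involutive_quantale m e st \<and>
     (\<forall>s. m (br s) (br s) = br s \<and> br s = st (br s)) \<and>
     br e = bot \<and>
     (\<forall>s x. m s x = bot \<longleftrightarrow> (\<exists>y. x = m (br s) y))"

definition fq_perp :: "('a \<Rightarrow> 'a) \<Rightarrow> ('a \<Rightarrow> 'a) \<Rightarrow> 'a \<Rightarrow> 'a" where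
  "fq_perp st br t = br (st t)"

definition fq_le :: "('a \<Rightarrow> 'a \<Rightarrow> 'a) \<Rightarrow> 'a \<Rightarrow> 'a \<Rightarrow> bool" where
  "fq_le m s t \<longleftrightarrow> s = m t s"

definition complete_orthomodular_lattice ::
  "'a set \<Rightarrow> ('a \<Rightarrow> 'a \<Rightarrow> bool) \<Rightarrow> 'a \<Rightarrow> ('a \<Rightarrow> 'a) \<Rightarrow> ('a \<Rightarrow> 'a \<Rightarrow> 'a) \<Rightarrow> ('a set \<Rightarrow> 'a) \<Rightarrow> bool" where
  "complete_orthomodular_lattice K le tp cpl meet Join \<longleftrightarrow>
     (\<forall>x\<in>K. le x x) \<and>
     (\<forall>x\<in>K. \<forall>y\<in>K. le x y \<and> le y x \<longrightarrow> x = y) \<and>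
     (\<forall>x\<in>K. \<forall>y\<in>K. \<forall>z\<in>K. le x y \<and> le y z \<longrightarrow> le x z) \<and>
     tp \<in> K \<and> (\<forall>x\<in>K. le x tp) \<and>
     (\<forall>S. S \<subseteq> K \<longrightarrow> Join S \<in> K \<and> (\<forall>x\<in>S. le x (Join S)) \<and>
          (\<forall>u\<in>K. (\<forall>x\<in>S. le x u) \<longrightarrow> le (Join S) u)) \<and>
     (\<forall>x\<in>K. \<forall>y\<in>K. meet x y \<in> K \<and> le (meet x y) x \<and> le (meet x y) y \<and>
          (\<forall>u\<in>K. le u x \<and> le u y \<longrightarrow> le u (meet x y))) \<and>
     (\<forall>x\<in>K. cpl x \<in> K \<and> cpl (cpl x) = x) \<and>
     (\<forall>x\<in>K. \<forall>y\<in>K. le x y \<longrightarrow> le (cpl y) (cpl x)) \<and>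
     (\<forall>x\<in>K. meet x (cpl x) = Join {}) \<and>
     (\<forall>x\<in>K. \<forall>y\<in>K. le x y \<longrightarrow> y = Join {x, meet (cpl x) y})"

end

theory Submission
  imports Defs
begin

locale fqx =
  fixes m :: "'a::complete_lattice \<Rightarrow> 'a \<Rightarrow> 'a"
    and e :: 'a and st :: "'a \<Rightarrow> 'a" and br :: "'a \<Rightarrow> 'a"
  assumes fq: "foulis_quantale m e st br"
begin

lemma assoc: "m (m a b) c = m a (m b c)"
  using fq unfolding foulis_quantale_def unital_involutive_quantale_def quantale_def by blast
lemma supl: "m a (Sup A) = Sup (m a ` A)"
  using fq unfolding foulis_quantale_def unital_involutive_quantale_def quantale_def by blast
lemma unitl: "m e a = a"
  using fq unfolding foulis_quantale_def unital_involutive_quantale_def by blast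
lemma stst: "st (st a) = a"
  using fq unfolding foulis_quantale_def unital_involutive_quantale_def by blast
lemma stm: "st (m a b) = m (st b) (st a)"
  using fq unfolding foulis_quantale_def unital_involutive_quantale_def by blast
lemma stSup: "st (Sup A) = Sup (st ` A)"
  using fq unfolding foulis_quantale_def unital_involutive_quantale_def by blast
lemma bridem: "m (br s) (br s) = br s"
  using fq unfolding foulis_quantale_def by blast
lemma brst: "st (br s) = br s"
  using fq unfolding foulis_quantale_def by metis
lemma bre: "br e = bot"
  using fq unfolding foulis_quantale_def by blast
lemma ann: "m s x = bot \<longleftrightarrow> (\<exists>y. x = m (br s) y)"
  using fq unfolding foulis_quantale_def by blast

lemma mbotr: "m a bot = bot"
  by (metis Sup_empty image_empty supl)
lemma stbot: "st bot = bot"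
  by (metis Sup_empty image_empty stSup)

lemma ann2: "m s x = bot \<longleftrightarrow> x = m (br s) x"
proof
  assume "m s x = bot"
  then obtain y where y: "x = m (br s) y" using ann by blast
  then have "m (br s) x = m (m (br s) (br s)) y" by (simp add: assoc)
  then show "x = m (br s) x" using y bridem by simp
next
  assume "x = m (br s) x" then show "m s x = bot" using ann by blast
qed

lemma s_br: "m s (br s) = bot"
  using ann2 bridem by metis

lemma st_inj: "st a = st b \<Longrightarrow> a = b"
  by (metis stst)

lemma st_bot_iff: "st a = bot \<longleftrightarrow> a = bot"
  by (metis stbot stst)

lemma leftann: "m y s = bot \<longleftrightarrow> y = m y (br (st s))"
proof -
  have "m y s = bot \<longleftrightarrow> m (st s) (st y) = bot" by (metis st_bot_iff stm)
  also have "\<dots> \<longleftrightarrow> st y = m (br (st s)) (st y)" by (rule ann2)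
  also have "\<dots> \<longleftrightarrow> y = m y (br (st s))" by (metis brst stm stst)
  finally show ?thesis .
qed

lemma brbr3: "br (br (br u)) = br u"
proof -
  define p where "p = br u"
  have up: "m u p = bot" unfolding p_def by (rule s_br)
  have pbp: "m p (br p) = bot" by (rule s_br)
  have bpp: "m (br p) p = bot"
    by (metis pbp brst p_def st_bot_iff stm)
  have u: "u = m u (br p)" using up leftann p_def brst by metis
  have "m u (br (br p)) = m u (m (br p) (br (br p)))" using u by (metis assoc)
  then have "m u (br (br p)) = bot" using s_br mbotr by metis
  then have c1: "br (br p) = m p (br (br p))" using ann2 p_def by metis
  have c2: "p = m (br (br p)) p" using bpp ann2 by metis
  have "p = st p" using p_def brst by metis
  also have "\<dots> = m p (br (br p))" using c2 by (metis stm brst p_def)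
  finally show ?thesis using c1 p_def by metis
qed

lemma brbr: "k \<in> range br \<Longrightarrow> br (br k) = k"
  using brbr3 by auto

lemma t_lemma: "t = m (br (br (st t))) t"
proof -
  have "m (st t) (br (st t)) = bot" by (rule s_br)
  then have "st t = m (st t) (br (br (st t)))" using leftann brst by metis
  then show ?thesis by (metis stm stst brst)
qed

lemma perp_anti: "t = m r t \<Longrightarrow> br (st r) = m (br (st t)) (br (st r))"
proof -
  assume h: "t = m r t"
  then have "st t = m (st t) (st r)" using stm by metis
  then have "m (st t) (br (st r)) = m (st t) (m (st r) (br (st r)))" by (metis assoc)
  then have "m (st t) (br (st r)) = bot" using s_br mbotr by metis
  then show ?thesis using ann2 by metis
qed

lemma e_top: "br bot = e"
  by (metis ann2 unitl stbot mbotr stst stm)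

lemma botl: "m bot a = bot"
  by (metis st_bot_iff stm mbotr)


lemma supr: "m (Sup A) a = Sup ((\<lambda>b. m b a) ` A)"
  using fq unfolding foulis_quantale_def unital_involutive_quantale_def quantale_def by blast

lemma Kst: "k \<in> range br \<Longrightarrow> st k = k" using brst by auto
lemma Kid: "k \<in> range br \<Longrightarrow> m k k = k" using bridem by auto

lemma minproj: "p \<in> range br \<Longrightarrow> t = m p t \<Longrightarrow> br (br (st t)) = m p (br (br (st t)))"
proof -
  assume p: "p \<in> range br" and t: "t = m p t"
  have "br (st p) = m (br (st t)) (br (st p))" using perp_anti t by blast
  then have "br p = m (br (st t)) (br p)" using Kst p by simp
  then have "br (st (br (st t))) = m (br (st (br p))) (br (st (br (st t))))"
    using perp_anti by blast
  then show ?thesis using brst brbr p by simp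
qed

lemma join_upper: assumes S: "S \<subseteq> range br" and x: "x \<in> S"
  shows "x = m (br (br (Sup S))) x"
proof -
  have "m (Sup S) (br (Sup S)) = bot" by (rule s_br)
  then have "Sup ((\<lambda>b. m b (br (Sup S))) ` S) = bot" using supr by metis
  then have "m x (br (Sup S)) = bot" using x
    by (metis (no_types, lifting) SUP_upper bot_unique)
  then have "st (m x (br (Sup S))) = bot" using stbot by simp
  then have "m (br (Sup S)) x = bot" using stm brst Kst x S by (metis subsetD)
  then show ?thesis using ann2 by metis
qed

lemma join_least: assumes S: "S \<subseteq> range br" and u: "u \<in> range br"
  and h: "\<forall>x\<in>S. x = m u x"
  shows "br (br (Sup S)) = m u (br (br (Sup S)))"
proof -
  have "st ` S = S" using S Kst by force
  then have stJ: "st (Sup S) = Sup S" using stSup by simp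
  have "m u ` S = S" using h by force
  then have J: "Sup S = m u (Sup S)" using supl by simp
  show ?thesis using minproj[OF u J] stJ by simp
qed

lemma meet_x: assumes x: "x \<in> range br"
  shows "br (br (st (m x z))) = m x (br (br (st (m x z))))"
  using minproj[OF x] assoc Kid[OF x] by metis

lemma meet_y: assumes y: "y \<in> range br"
  shows "br (br (st (m x (br (m (br y) x))))) = m y (br (br (st (m x (br (m (br y) x))))))"
proof -
  have "m (br y) (m x (br (m (br y) x))) = bot" using s_br assoc by metis
  then have "m x (br (m (br y) x)) = m (br (br y)) (m x (br (m (br y) x)))" using ann2 by metis
  then have "m x (br (m (br y) x)) = m y (m x (br (m (br y) x)))" using brbr y by simp
  then show ?thesis using minproj[OF y] by metis
qed

lemma meet_gr: assumes x: "x \<in> range br" and y: "y \<in> range br" and u: "u \<in> range br"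
  and ux: "u = m x u" and uy: "u = m y u"
  shows "u = m (br (br (st (m x (br (m (br y) x)))))) u"
proof -
  define w where "w = m x (br (m (br y) x))"
  have "m (br y) y = bot" using s_br brst y Kst by (metis stm st_bot_iff)
  then have "m (br y) u = bot" using uy assoc botl by metis
  then have "m (m (br y) x) u = bot" using ux assoc by metis
  then have u2: "u = m (br (m (br y) x)) u" using ann2 by metis
  have wu: "m w u = u" unfolding w_def using u2 ux assoc by metis
  have "w = m (br (br (st w))) w" by (rule t_lemma)
  then have "m (br (br (st w))) u = u" using wu assoc by metis
  then show ?thesis unfolding w_def by simp
qed


definition "mt x y = br (br (st (m x (br (m (br y) x)))))"

lemma mtK: "mt x y \<in> range br" unfolding mt_def by simp

lemma ortho: assumes x: "x \<in> range br" and y: "y \<in> range br" and xy: "x = m y x"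
  shows "y = br (br (Sup {x, mt (br x) y}))"
proof -
  define M where "M = mt (br x) y"
  define j where "j = br (br (Sup {x, M}))"
  have S: "{x, M} \<subseteq> range br" using x mtK M_def by auto
  have jK: "j \<in> range br" unfolding j_def by simp
  have xj: "x = m j x" using join_upper[OF S] j_def by simp
  have My: "M = m y M" using meet_y[OF y] unfolding M_def mt_def by simp
  have jy: "j = m y j" using join_least[OF S y] xy My j_def by simp
  define z where "z = mt y (br j)"
  have zy: "z = m y z" unfolding z_def mt_def by (rule meet_x[OF y])
  have zj': "z = m (br j) z" unfolding z_def mt_def by (rule meet_y) simp
  have jx: "br j = m (br x) (br j)" using perp_anti[OF xj] Kst x jK by simp
  have zx: "z = m (br x) z" using zj' jx assoc by metis
  have zM: "z = m M z" unfolding M_def mt_def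
    by (rule meet_gr[OF _ y]) (use zx zy mtK z_def in auto)
  have zj: "z = m j z" using zM My j_def join_upper[OF S] assoc by (metis insertCI)
  have mjj: "mt j (br j) = bot"
    unfolding mt_def using brbr[OF jK] Kid[OF jK] s_br stbot e_top bre by simp
  have "z = m (mt j (br j)) z" unfolding mt_def
    by (rule meet_gr[OF jK]) (use zj zj' z_def mtK in auto)
  then have z0: "z = bot" using mjj botl by simp
  have jy2: "m j y = j" using jy Kst jK y stm by metis
  define w2 where "w2 = m y (br j)"
  have "z = br (br (st w2))" unfolding z_def mt_def w2_def using brbr[OF jK] jy2 by simp
  then have "w2 = bot" using t_lemma[of w2] z0 botl by metis
  then have "m (br j) y = bot" unfolding w2_def using stm brst Kst y stbot by metis
  then have "y = m (br (br j)) y" using ann2 by metis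
  then have "y = j" using brbr[OF jK] jy2 by simp
  then show ?thesis unfolding j_def M_def .
qed

lemma main:
  shows "(\<forall>t r. m (st r) t = bot \<longleftrightarrow> t = m (br (st r)) t)
    \<and> (\<forall>t r. fq_le m t r \<longrightarrow> fq_le m (fq_perp st br r) (fq_perp st br t))
    \<and> (\<forall>k\<in>range br. fq_perp st br (fq_perp st br k) = k)
    \<and> (\<forall>t r. fq_le m t (fq_perp st br r) \<longleftrightarrow> fq_le m r (fq_perp st br t))
    \<and> complete_orthomodular_lattice (range br) (fq_le m) (br bot) br
        (\<lambda>k1 k2. fq_perp st br (fq_perp st br (m k1 (br (m (br k2) k1)))))
        (\<lambda>S. br (br (Sup S)))"
proof -
  have meq: "(\<lambda>k1 k2. fq_perp st br (fq_perp st br (m k1 (br (m (br k2) k1))))) = mt"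
    by (intro ext) (simp add: fq_perp_def mt_def brst)
  have p1: "\<forall>t r. m (st r) t = bot \<longleftrightarrow> t = m (br (st r)) t" using ann2 by blast
  have p2: "\<forall>t r. fq_le m t r \<longrightarrow> fq_le m (fq_perp st br r) (fq_perp st br t)"
    unfolding fq_le_def fq_perp_def using perp_anti by blast
  have p3: "\<forall>k\<in>range br. fq_perp st br (fq_perp st br k) = k"
    unfolding fq_perp_def using brbr brst by auto
  have sym: "fq_le m t (fq_perp st br r) \<Longrightarrow> fq_le m r (fq_perp st br t)" for t r
  proof -
    assume "fq_le m t (fq_perp st br r)"
    then have "m (st r) t = bot" unfolding fq_le_def fq_perp_def using ann2 by metis
    then have "m (st t) r = bot" using stm stst stbot by metis
    then show ?thesis unfolding fq_le_def fq_perp_def using ann2 by metis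
  qed
  have p4: "\<forall>t r. fq_le m t (fq_perp st br r) \<longleftrightarrow> fq_le m r (fq_perp st br t)"
    using sym by blast
  have p5: "complete_orthomodular_lattice (range br) (fq_le m) (br bot) br mt
        (\<lambda>S. br (br (Sup S)))"
    unfolding complete_orthomodular_lattice_def fq_le_def
  proof (intro conjI ballI allI impI)
    show "x = m x x" if "x \<in> range br" for x using Kid that by simp
    show "x = y" if "x \<in> range br" "y \<in> range br" "x = m y x \<and> y = m x y" for x y
      using that Kst stm by metis
    show "x = m z x" if "x \<in> range br" "y \<in> range br" "z \<in> range br"
      "x = m y x \<and> y = m z y" for x y z using that assoc by metis
    show "br bot \<in> range br" by simp
    show "x = m (br bot) x" for x using e_top unitl by simp
    show "br (br (Sup S)) \<in> range br" for S by simp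
    show "x = m (br (br (Sup S))) x" if "S \<subseteq> range br" "x \<in> S" for S x
      using join_upper that by blast
    show "br (br (Sup S)) = m u (br (br (Sup S)))"
      if "S \<subseteq> range br" "u \<in> range br" "\<forall>x\<in>S. x = m u x" for S u
      using join_least that by blast
    show "mt x y \<in> range br" for x y by (rule mtK)
    show "mt x y = m x (mt x y)" if "x \<in> range br" for x y
      unfolding mt_def using meet_x that by blast
    show "mt x y = m y (mt x y)" if "y \<in> range br" for x y
      unfolding mt_def using meet_y that by blast
    show "u = m (mt x y) u" if "x \<in> range br" "y \<in> range br" "u \<in> range br"
      "u = m x u \<and> u = m y u" for x y u
      unfolding mt_def using meet_gr that by blast
    show "br x \<in> range br" for x by simp
    show "br (br x) = x" if "x \<in> range br" for x using brbr that by blast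
    show "br y = m (br x) (br y)" if "x \<in> range br" "y \<in> range br" "x = m y x" for x y
      using perp_anti that Kst by metis
    show "mt x (br x) = br (br (Sup {}))" if "x \<in> range br" for x
      unfolding mt_def using brbr[OF that] Kid[OF that] s_br stbot e_top bre by simp
    show "y = br (br (Sup {x, mt (br x) y}))"
      if "x \<in> range br" "y \<in> range br" "x = m y x" for x y
      using ortho that by blast
  qed
  show ?thesis using p1 p2 p3 p4 p5 meq by simp
qed

end

theorem mainTheorem5:
  fixes m :: "'a::complete_lattice \<Rightarrow> 'a \<Rightarrow> 'a"
    and e :: 'a and st :: "'a \<Rightarrow> 'a" and br :: "'a \<Rightarrow> 'a"
  assumes "foulis_quantale m e st br"
  shows "(\<forall>t r. m (st r) t = bot \<longleftrightarrow> t = m (br (st r)) t)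
    \<and> (\<forall>t r. fq_le m t r \<longrightarrow> fq_le m (fq_perp st br r) (fq_perp st br t))
    \<and> (\<forall>k\<in>range br. fq_perp st br (fq_perp st br k) = k)
    \<and> (\<forall>t r. fq_le m t (fq_perp st br r) \<longleftrightarrow> fq_le m r (fq_perp st br t))
    \<and> complete_orthomodular_lattice (range br) (fq_le m) (br bot) br
        (\<lambda>k1 k2. fq_perp st br (fq_perp st br (m k1 (br (m (br k2) k1)))))
        (\<lambda>S. br (br (Sup S)))"
  using fqx.main[OF fqx.intro[OF assms]] .

end
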